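(* Let $G$ be a graph and let $H = K_1 + G$ be the join of a single new node with $G$ (the new node adjacent to every node of $G$). If $H$ is non-graceful, then $G$ is non-supergraceful.
   Context: Graphs are finite, simple. A graceful labeling of a graph with $q$ edges is an injective map $\varphi: V \to \{0,\dots,q\}$ whose induced edge labels $|\varphi(u)-\varphi(v)|$ are pairwise distinct; a graph is graceful if it has one, non-graceful otherwise. For a graph $G$ with $p$ nodes and $q$ edges, a total labeling is a map $\varphi: V(G) \to \{1,\dots,p+q\}$ such that the $p$ node labels $\varphi(u)$ and the $q$ edge labels $|\varphi(u)-\varphi(v)|$, $uv \in E(G)$, are all pairwise distinct, so that together they form exactly $\{1,\dots,p+q\}$. $G$ is supergraceful if it admits a total labeling, and non-supergraceful otherwise. *)

theory Defs
  imports Main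
begin

definition simple_graph :: "'a set \<Rightarrow> 'a set set \<Rightarrow> bool" where
  "simple_graph V E \<longleftrightarrow> finite V \<and>
     (\<forall>e\<in>E. \<exists>u v. u \<in> V \<and> v \<in> V \<and> u \<noteq> v \<and> e = {u, v})"

definition edge_labels_distinct :: "'a set set \<Rightarrow> ('a \<Rightarrow> int) \<Rightarrow> bool" where
  "edge_labels_distinct E \<phi> \<longleftrightarrow>
     (\<forall>u v x y. {u, v} \<in> E \<longrightarrow> {x, y} \<in> E \<longrightarrow> {u, v} \<noteq> {x, y} \<longrightarrow>
        \<bar>\<phi> u - \<phi> v\<bar> \<noteq> \<bar>\<phi> x - \<phi> y\<bar>)"

definition edge_label_set :: "'a set set \<Rightarrow> ('a \<Rightarrow> int) \<Rightarrow> int set" where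
  "edge_label_set E \<phi> = {\<bar>\<phi> u - \<phi> v\<bar> | u v. {u, v} \<in> E}"

definition graceful_labeling :: "'a set \<Rightarrow> 'a set set \<Rightarrow> ('a \<Rightarrow> int) \<Rightarrow> bool" where
  "graceful_labeling V E \<phi> \<longleftrightarrow>
     inj_on \<phi> V \<and> \<phi> ` V \<subseteq> {0 .. int (card E)} \<and> edge_labels_distinct E \<phi>"

definition graceful :: "'a set \<Rightarrow> 'a set set \<Rightarrow> bool" where
  "graceful V E \<longleftrightarrow> (\<exists>\<phi>. graceful_labeling V E \<phi>)"

definition total_labeling :: "'a set \<Rightarrow> 'a set set \<Rightarrow> ('a \<Rightarrow> int) \<Rightarrow> bool" where
  "total_labeling V E \<phi> \<longleftrightarrow>
     \<phi> ` V \<subseteq> {1 .. int (card V + card E)} \<and>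
     inj_on \<phi> V \<and> edge_labels_distinct E \<phi> \<and>
     \<phi> ` V \<inter> edge_label_set E \<phi> = {} \<and>
     \<phi> ` V \<union> edge_label_set E \<phi> = {1 .. int (card V + card E)}"

definition supergraceful :: "'a set \<Rightarrow> 'a set set \<Rightarrow> bool" where
  "supergraceful V E \<longleftrightarrow> (\<exists>\<phi>. total_labeling V E \<phi>)"

definition join_K1_nodes :: "'a set \<Rightarrow> 'a option set" where
  "join_K1_nodes V = insert None (Some ` V)"

definition join_K1_edges :: "'a set \<Rightarrow> 'a set set \<Rightarrow> 'a option set set" where
  "join_K1_edges V E = (image Some) ` E \<union> {{None, Some v} | v. v \<in> V}"

end

theory Submission
  imports Defs
begin

lemma join_edge_char:
  assumes sg: "simple_graph V E"
  shows "{u, v} \<in> join_K1_edges V E \<longleftrightarrow>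
     (\<exists>a b. u = Some a \<and> v = Some b \<and> {a, b} \<in> E) \<or>
     (u = None \<and> (\<exists>w\<in>V. v = Some w)) \<or> (v = None \<and> (\<exists>w\<in>V. u = Some w))"
proof
  assume h: "{u, v} \<in> join_K1_edges V E"
  show "(\<exists>a b. u = Some a \<and> v = Some b \<and> {a, b} \<in> E) \<or>
     (u = None \<and> (\<exists>w\<in>V. v = Some w)) \<or> (v = None \<and> (\<exists>w\<in>V. u = Some w))"
  proof (cases "{u, v} \<in> (image Some) ` E")
    case True
    then obtain e where e: "e \<in> E" "{u, v} = Some ` e" by auto
    from sg e(1) obtain a b where ab: "e = {a, b}" unfolding simple_graph_def by blast
    from e(2) ab have "{u, v} = {Some a, Some b}" by simp
    then have "(u = Some a \<and> v = Some b) \<or> (u = Some b \<and> v = Some a)"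
      by (metis doubleton_eq_iff)
    then show ?thesis using e(1) ab by (metis insert_commute)
  next
    case False
    with h obtain w where w: "w \<in> V" "{u, v} = {None, Some w}"
      unfolding join_K1_edges_def by auto
    then have "(u = None \<and> v = Some w) \<or> (u = Some w \<and> v = None)"
      by (metis doubleton_eq_iff)
    then show ?thesis using w by blast
  qed
next
  assume "(\<exists>a b. u = Some a \<and> v = Some b \<and> {a, b} \<in> E) \<or>
     (u = None \<and> (\<exists>w\<in>V. v = Some w)) \<or> (v = None \<and> (\<exists>w\<in>V. u = Some w))"
  then show "{u, v} \<in> join_K1_edges V E"
  proof (elim disjE exE conjE bexE)
    fix a b assume "u = Some a" "v = Some b" "{a, b} \<in> E"
    then have "{u, v} = Some ` {a, b}" by simp
    then show ?thesis unfolding join_K1_edges_def using \<open>{a, b} \<in> E\<close> by blast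
  next
    fix w assume "u = None" "w \<in> V" "v = Some w"
    then show ?thesis unfolding join_K1_edges_def by blast
  next
    fix w assume "v = None" "w \<in> V" "u = Some w"
    then have "{u, v} = {None, Some w}" by auto
    then show ?thesis unfolding join_K1_edges_def using \<open>w \<in> V\<close> by blast
  qed
qed

lemma card_join_edges:
  assumes sg: "simple_graph V E"
  shows "card (join_K1_edges V E) = card V + card E"
proof -
  have fV: "finite V" using sg unfolding simple_graph_def by blast
  have EP: "E \<subseteq> Pow V"
  proof
    fix e assume "e \<in> E"
    then obtain u v where "u \<in> V" "v \<in> V" "e = {u, v}"
      using sg unfolding simple_graph_def by meson
    then show "e \<in> Pow V" by simp
  qed
  have fE: "finite E" using fV EP by (meson finite_Pow_iff finite_subset)
  have c1: "card ((image Some) ` E) = card E"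
  proof (rule card_image, rule inj_onI)
    fix x y :: "'a set" assume "Some ` x = Some ` y"
    then show "x = y" using inj_image_eq_iff[OF inj_Some] by blast
  qed
  have eq2: "{{None, Some v} | v. v \<in> V} = (\<lambda>v. {None, Some v}) ` V" by auto
  have c2: "card {{None, Some v} | v. v \<in> V} = card V"
    unfolding eq2 by (rule card_image) (simp add: inj_on_def doubleton_eq_iff)
  have disj: "(image Some) ` E \<inter> {{None, Some v} | v. v \<in> V} = {}" by auto
  show ?thesis unfolding join_K1_edges_def
    using card_Un_disjoint[OF finite_imageI[OF fE] _ disj] c1 c2 eq2 fV by simp
qed

theorem theorem7p3:
  fixes V :: "'a set" and E :: "'a set set"
  assumes "simple_graph V E"
    and "\<not> graceful (join_K1_nodes V) (join_K1_edges V E)"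
  shows "\<not> supergraceful V E"
proof
  assume "supergraceful V E"
  then obtain \<phi> where t: "total_labeling V E \<phi>" unfolding supergraceful_def by blast
  have rng: "\<phi> ` V \<subseteq> {1 .. int (card V + card E)}" and inj: "inj_on \<phi> V"
    and eld: "edge_labels_distinct E \<phi>" and dj: "\<phi> ` V \<inter> edge_label_set E \<phi> = {}"
    using t unfolding total_labeling_def by auto
  define \<psi> where "\<psi> = case_option 0 \<phi>"
  have pos: "\<And>w. w \<in> V \<Longrightarrow> \<phi> w \<ge> 1" using rng by auto
  have g: "graceful_labeling (join_K1_nodes V) (join_K1_edges V E) \<psi>"
    unfolding graceful_labeling_def
  proof (intro conjI)
    show "inj_on \<psi> (join_K1_nodes V)"
      unfolding join_K1_nodes_def inj_on_def \<psi>_def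
    proof (intro ballI impI)
      fix x y assume "x \<in> insert None (Some ` V)" "y \<in> insert None (Some ` V)"
        "case_option 0 \<phi> x = case_option 0 \<phi> y"
      then show "x = y"
      proof (cases x; cases y)
        fix a b assume "x = Some a" "y = Some b" "x \<in> insert None (Some ` V)"
          "y \<in> insert None (Some ` V)" "case_option 0 \<phi> x = case_option 0 \<phi> y"
        then have "a \<in> V" "b \<in> V" "\<phi> a = \<phi> b" by auto
        then have "a = b" using inj by (meson inj_onD)
        then show "x = y" using \<open>x = Some a\<close> \<open>y = Some b\<close> by simp
      next
        fix b assume "x = None" "y = Some b"
          "y \<in> insert None (Some ` V)" "case_option 0 \<phi> x = case_option 0 \<phi> y"
        then have "b \<in> V" "0 = \<phi> b" by auto
        then show "x = y" using pos[of b] by simp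
      next
        fix a assume "x = Some a" "y = None"
          "x \<in> insert None (Some ` V)" "case_option 0 \<phi> x = case_option 0 \<phi> y"
        then have "a \<in> V" "\<phi> a = 0" by auto
        then show "x = y" using pos[of a] by simp
      qed simp
    qed
    show "\<psi> ` join_K1_nodes V \<subseteq> {0 .. int (card (join_K1_edges V E))}"
      unfolding join_K1_nodes_def card_join_edges[OF assms(1)]
    proof (rule image_subsetI)
      fix z assume "z \<in> insert None (Some ` V)"
      then show "\<psi> z \<in> {0 .. int (card V + card E)}"
      proof
        assume "z = None" then show ?thesis unfolding \<psi>_def by simp
      next
        assume "z \<in> Some ` V"
        then obtain w where "w \<in> V" "z = Some w" by blast
        then have "\<phi> w \<in> {1 .. int (card V + card E)}" using rng by blast
        then show ?thesis unfolding \<psi>_def using \<open>z = Some w\<close> by simp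
      qed
    qed
    show "edge_labels_distinct (join_K1_edges V E) \<psi>"
      unfolding edge_labels_distinct_def
    proof (intro allI impI)
      fix u v x y
      assume e1: "{u, v} \<in> join_K1_edges V E" and e2: "{x, y} \<in> join_K1_edges V E"
        and ne: "{u, v} \<noteq> {x, y}"
      have A: "\<And>a b w. {a, b} \<in> E \<Longrightarrow> w \<in> V \<Longrightarrow> \<bar>\<phi> a - \<phi> b\<bar> \<noteq> \<phi> w"
      proof
        fix a b w assume "{a, b} \<in> E" "w \<in> V" "\<bar>\<phi> a - \<phi> b\<bar> = \<phi> w"
        then have "\<phi> w \<in> edge_label_set E \<phi>" unfolding edge_label_set_def by force
        with dj \<open>w \<in> V\<close> show False by blast
      qed
      have B: "\<And>w w'. w \<in> V \<Longrightarrow> w' \<in> V \<Longrightarrow> w \<noteq> w' \<Longrightarrow> \<phi> w \<noteq> \<phi> w'"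
        using inj by (meson inj_on_def)
      have C: "\<And>u v. {u, v} \<in> join_K1_edges V E \<Longrightarrow>
          (\<exists>a b. {a, b} \<in> E \<and> \<bar>\<psi> u - \<psi> v\<bar> = \<bar>\<phi> a - \<phi> b\<bar> \<and> {u, v} = {Some a, Some b}) \<or>
          (\<exists>w\<in>V. \<bar>\<psi> u - \<psi> v\<bar> = \<phi> w \<and> {u, v} = {None, Some w})"
      proof -
        fix u v assume "{u, v} \<in> join_K1_edges V E"
        then have "(\<exists>a b. u = Some a \<and> v = Some b \<and> {a, b} \<in> E) \<or>
          (u = None \<and> (\<exists>w\<in>V. v = Some w)) \<or> (v = None \<and> (\<exists>w\<in>V. u = Some w))"
          using join_edge_char[OF assms(1)] by blast
        then show "(\<exists>a b. {a, b} \<in> E \<and> \<bar>\<psi> u - \<psi> v\<bar> = \<bar>\<phi> a - \<phi> b\<bar> \<and> {u, v} = {Some a, Some b}) \<or>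
          (\<exists>w\<in>V. \<bar>\<psi> u - \<psi> v\<bar> = \<phi> w \<and> {u, v} = {None, Some w})"
        proof (elim disjE exE conjE bexE)
          fix a b assume "u = Some a" "v = Some b" "{a, b} \<in> E"
          then show ?thesis unfolding \<psi>_def by auto
        next
          fix w assume "u = None" "w \<in> V" "v = Some w"
          then show ?thesis unfolding \<psi>_def using pos[of w] by auto
        next
          fix w assume "v = None" "w \<in> V" "u = Some w"
          then show ?thesis unfolding \<psi>_def using pos[of w] by (auto simp: insert_commute)
        qed
      qed
      show "\<bar>\<psi> u - \<psi> v\<bar> \<noteq> \<bar>\<psi> x - \<psi> y\<bar>"
        using C[OF e1] C[OF e2]
      proof (elim disjE exE conjE bexE)
        fix a b c d assume h: "{a, b} \<in> E" "\<bar>\<psi> u - \<psi> v\<bar> = \<bar>\<phi> a - \<phi> b\<bar>" "{u, v} = {Some a, Some b}"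
          "{c, d} \<in> E" "\<bar>\<psi> x - \<psi> y\<bar> = \<bar>\<phi> c - \<phi> d\<bar>" "{x, y} = {Some c, Some d}"
        have "{a, b} \<noteq> {c, d}"
        proof
          assume "{a, b} = {c, d}"
          then have "Some ` {a, b} = Some ` {c, d}" by simp
          then show False using ne h(3,6) by simp
        qed
        from eld[unfolded edge_labels_distinct_def, rule_format, OF h(1) h(4) this]
        show ?thesis using h(2,5) by simp
      next
        fix a b w assume h: "{a, b} \<in> E" "\<bar>\<psi> u - \<psi> v\<bar> = \<bar>\<phi> a - \<phi> b\<bar>"
          "w \<in> V" "\<bar>\<psi> x - \<psi> y\<bar> = \<phi> w"
        then show ?thesis using A by metis
      next
        fix a b w assume h: "{a, b} \<in> E" "\<bar>\<psi> x - \<psi> y\<bar> = \<bar>\<phi> a - \<phi> b\<bar>"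
          "w \<in> V" "\<bar>\<psi> u - \<psi> v\<bar> = \<phi> w"
        then show ?thesis using A by metis
      next
        fix w w' assume h: "w \<in> V" "\<bar>\<psi> u - \<psi> v\<bar> = \<phi> w" "{u, v} = {None, Some w}"
          "w' \<in> V" "\<bar>\<psi> x - \<psi> y\<bar> = \<phi> w'" "{x, y} = {None, Some w'}"
        have "w \<noteq> w'" using ne h by auto
        then show ?thesis using B h by metis
      qed
    qed
  qed
  with assms(2) show False unfolding graceful_def by blast
qed

end
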